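(* Assume $\lambda_1<\lambda_2$ and $\lambda_1<\lambda_3$, and fix $a,b>0$. Then for all sufficiently large $\Delta>0$ there exist constants $C>0$ and $\varepsilon>0$ such that for every $y=(y_2,y_3)\in\mathbb Z^2$ with $\min(y_2,y_3)<0$ and $\varphi(y)>C$: (a) $D_R(y):=\sum_{z\ne y} r_{yz}\,(\varphi(z)-\varphi(y))\le 0$; (b) $\varphi(y+M_F(y))-\varphi(y)<-5\varepsilon$, where $M_F(y)=(\lambda_2-\lambda_1,\lambda_3-\lambda_1)$.
   Context: Markov chain $Y(n)=(y_2,y_3)\in\mathbb Z^2$ (relative coordinates $y_j=x_j-x_1$ of the embedded chain of the 3-processor cascade model, time normalized so that $\lambda_1+\lambda_2+\lambda_3+\beta_{12}+\beta_{23}=1$, all parameters positive). Its transition probabilities are $p_{yz}=s_{yz}+r_{yz}$ for $z\ne y$, $p_{yy}=1-\sum_{z\ne y}p_{yz}$, where the free-dynamics part is $s_{y,y+(1,0)}=\lambda_2$, $s_{y,y+(0,1)}=\lambda_3$, $s_{y,y-(1,1)}=\lambda_1$ (others $0$), and the rollback part $r_{yz}$ (with $b_2=\lambda_2/(\lambda_2+\beta_{23})$) is: if $y_2>0$ and $y_3\le 0$: $r_{y,(0,y_3)}=\beta_{12}$; if $y_2<y_3$: $r_{y,(y_2,y_2)}$ receives $\beta_{23}$; if $0<y_3\le y_2$: $r_{y,(0,z_3)}$ receives $\beta_{12}(1-b_2)^{z_3}b_2$ for $0\le z_3<y_3$ and $\beta_{12}(1-b_2)^{y_3}$ for $z_3=y_3$;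 if $0<y_2<y_3$: $r_{y,(0,z_3)}$ receives $\beta_{12}(1-b_2)^{z_3}b_2$ for $0\le z_3\le y_2$ and $\beta_{12}(1-b_2)^{y_2+1}$ for $z_3=y_3$ (contributions to the same $z$ are added). Contour $L$: let $e(y)=ay_2^2+b(y_2-y_3)^2$; let $T_3$ be the point of the ellipse $\{e=1\}$ at which the outer normal has direction $(-\Delta,1)$ and $T_2$ the point at which it has direction $(1,-\Delta)$ (for large $\Delta$, $T_3$ lies in $\{y_2<0,y_3<0\}$ and $T_2$ in $\{y_3<0\}$); let $K_3=(0,u_3)$ be the intersection of the tangent line at $T_3$ with the $y_3$-axis and $K_2=(u_2,0)$ the intersection of the tangent line at $T_2$ with the $y_2$-axis ($u_2,u_3>0$). $L$ is the closed curve formed by the segment $K_3K_2$, the segment $K_2T_2$, the arc $T_2T_3$ of the ellipse passing through $(-a^{-1/2},-a^{-1/2})$, and the segment $T_3K_3$; every open ray from the origin meets $L$ exactly once. Define $\varphi(0)=0$ and, for $y\ne0$, $\varphi(y)>0$ as the unique number with $y/\varphi(y)\in L$. *)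

theory Defs
  imports "HOL-Analysis.Analysis"
begin

definition ell :: "real \<Rightarrow> real \<Rightarrow> real \<times> real \<Rightarrow> real" where
  "ell a b p = a * (fst p)^2 + b * (fst p - snd p)^2"

definition ell_grad :: "real \<Rightarrow> real \<Rightarrow> real \<times> real \<Rightarrow> real \<times> real" where
  "ell_grad a b p = (2 * a * fst p + 2 * b * (fst p - snd p), - 2 * b * (fst p - snd p))"

definition T3 :: "real \<Rightarrow> real \<Rightarrow> real \<Rightarrow> real \<times> real" where
  "T3 a b D = (THE p. ell a b p = 1 \<and> (\<exists>t>0. ell_grad a b p = t *\<^sub>R (- D, 1)))"

definition T2 :: "real \<Rightarrow> real \<Rightarrow> real \<Rightarrow> real \<times> real" where
  "T2 a b D = (THE p. ell a b p = 1 \<and> (\<exists>t>0. ell_grad a b p = t *\<^sub>R (1, - D)))"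

text \<open>K3 = (0,u3): intersection of the tangent line at T3 with the y3-axis;
  K2 = (u2,0): intersection of the tangent line at T2 with the y2-axis.\<close>
definition K3 :: "real \<Rightarrow> real \<Rightarrow> real \<Rightarrow> real \<times> real" where
  "K3 a b D = (0, THE u. inner (ell_grad a b (T3 a b D)) ((0, u) - T3 a b D) = 0)"

definition K2 :: "real \<Rightarrow> real \<Rightarrow> real \<Rightarrow> real \<times> real" where
  "K2 a b D = (THE u. inner (ell_grad a b (T2 a b D)) ((u, 0) - T2 a b D) = 0, 0)"

definition ell_arc :: "real \<Rightarrow> real \<Rightarrow> real \<Rightarrow> (real \<times> real) set" where
  "ell_arc a b D =
     connected_component_set ({p. ell a b p = 1} - {T2 a b D, T3 a b D})
        (- 1 / sqrt a, - 1 / sqrt a) \<union> {T2 a b D, T3 a b D}"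

definition contour_L :: "real \<Rightarrow> real \<Rightarrow> real \<Rightarrow> (real \<times> real) set" where
  "contour_L a b D =
     closed_segment (K3 a b D) (K2 a b D) \<union> closed_segment (K2 a b D) (T2 a b D)
     \<union> ell_arc a b D \<union> closed_segment (T3 a b D) (K3 a b D)"

definition phi :: "real \<Rightarrow> real \<Rightarrow> real \<Rightarrow> real \<times> real \<Rightarrow> real" where
  "phi a b D y = (if y = 0 then 0 else (THE s. s > 0 \<and> (inverse s) *\<^sub>R y \<in> contour_L a b D))"

definition toR :: "int \<times> int \<Rightarrow> real \<times> real" where
  "toR z = (real_of_int (fst z), real_of_int (snd z))"

text \<open>Rollback part r_{yz} of the transition probabilities (contributions added),
  with b2 = lambda2 / (lambda2 + beta23).\<close>
definition rb :: "real \<Rightarrow> real \<Rightarrow> real \<Rightarrow> int \<times> int \<Rightarrow> int \<times> int \<Rightarrow> real" where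
  "rb l2 b12 b23 y z =
    (let y2 = fst y; y3 = snd y; z2 = fst z; z3 = snd z; b2 = l2 / (l2 + b23) in
       (if y2 > 0 \<and> y3 \<le> 0 \<and> z = (0, y3) then b12 else 0)
     + (if y2 < y3 \<and> z = (y2, y2) then b23 else 0)
     + (if 0 < y3 \<and> y3 \<le> y2 then
          (if z2 = 0 \<and> 0 \<le> z3 \<and> z3 < y3 then b12 * (1 - b2) ^ nat z3 * b2 else 0)
        + (if z = (0, y3) then b12 * (1 - b2) ^ nat y3 else 0)
        else 0)
     + (if 0 < y2 \<and> y2 < y3 then
          (if z2 = 0 \<and> 0 \<le> z3 \<and> z3 \<le> y2 then b12 * (1 - b2) ^ nat z3 * b2 else 0)
        + (if z = (0, y3) then b12 * (1 - b2) ^ nat (y2 + 1) else 0)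
        else 0))"

text \<open>D_R(y) = sum over z /= y of r_{yz} (phi z - phi y); only finitely many r_{yz} are nonzero.\<close>
definition D_R :: "real \<Rightarrow> real \<Rightarrow> real \<Rightarrow> real \<Rightarrow> real \<Rightarrow> real \<Rightarrow> int \<times> int \<Rightarrow> real" where
  "D_R l2 b12 b23 a b D y =
     (\<Sum>z | z \<noteq> y \<and> rb l2 b12 b23 y z \<noteq> 0.
        rb l2 b12 b23 y z * (phi a b D (toR z) - phi a b D (toR y)))"

end

theory Submission imports Defs begin

definition nn2 :: "real \<Rightarrow> real \<Rightarrow> real \<Rightarrow> real" where "nn2 a b D = sqrt((1-D)^2/a + D^2/b)"
definition nn3 :: "real \<Rightarrow> real \<Rightarrow> real \<Rightarrow> real" where "nn3 a b D = sqrt((1-D)^2/a + 1/b)"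
definition TT2 :: "real \<Rightarrow> real \<Rightarrow> real \<Rightarrow> real \<times> real" where "TT2 a b D = ((1-D)/a/nn2 a b D, ((1-D)/a - D/b)/nn2 a b D)"
definition TT3 :: "real \<Rightarrow> real \<Rightarrow> real \<Rightarrow> real \<times> real" where "TT3 a b D = ((1-D)/a/nn3 a b D, ((1-D)/a + 1/b)/nn3 a b D)"
definition Bf :: "real \<Rightarrow> real \<Rightarrow> real \<times> real \<Rightarrow> real \<times> real \<Rightarrow> real" where "Bf a b p x = a * fst p * fst x + b * (fst p - snd p) * (fst x - snd x)"

lemma nn2_pos: "a > 0 \<Longrightarrow> b > 0 \<Longrightarrow> D > 0 \<Longrightarrow> nn2 a b D > 0"
  unfolding nn2_def by (intro real_sqrt_gt_zero add_nonneg_pos) auto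
lemma nn3_pos: "a > 0 \<Longrightarrow> b > 0 \<Longrightarrow> nn3 a b D > 0"
  unfolding nn3_def by (intro real_sqrt_gt_zero add_nonneg_pos) auto
lemma nn2_sq: "a > 0 \<Longrightarrow> b > 0 \<Longrightarrow> (nn2 a b D)^2 = (1-D)^2/a + D^2/b"
  unfolding nn2_def by (simp add: add_nonneg_nonneg)
lemma nn3_sq: "a > 0 \<Longrightarrow> b > 0 \<Longrightarrow> (nn3 a b D)^2 = (1-D)^2/a + 1/b"
  unfolding nn3_def by (simp add: add_nonneg_nonneg)

lemma ell_Bf: "ell a b x = Bf a b x x"
  unfolding ell_def Bf_def by (simp add: power2_eq_square)

lemma Bf_sym: "Bf a b p x = Bf a b x p"
  unfolding Bf_def by (simp add: mult_ac)

lemma Bf_T2: assumes "a>0" "b>0" "D>0" shows "Bf a b (TT2 a b D) x = (fst x - D * snd x) / nn2 a b D"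
  using nn2_pos[OF assms] assms unfolding Bf_def TT2_def by (simp add: field_simps)
lemma Bf_T3: assumes "a>0" "b>0" shows "Bf a b (TT3 a b D) x = (snd x - D * fst x) / nn3 a b D"
proof -
  have n: "nn3 a b D > 0" using nn3_pos[OF assms] .
  have 1: "a * fst (TT3 a b D) = (1-D) / nn3 a b D" using assms unfolding TT3_def by simp
  have 2: "b * (fst (TT3 a b D) - snd (TT3 a b D)) = - 1 / nn3 a b D" using assms n unfolding TT3_def
    by (simp add: field_simps)
  have "Bf a b (TT3 a b D) x = (a * fst (TT3 a b D)) * fst x + (b * (fst (TT3 a b D) - snd (TT3 a b D))) * (fst x - snd x)"
    unfolding Bf_def by (simp add: algebra_simps)
  also have "\<dots> = (snd x - D * fst x) / nn3 a b D" unfolding 1 2 using n by (simp add: field_simps)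
  finally show ?thesis .
qed

lemma ell_T2: assumes "a>0" "b>0" "D>0" shows "ell a b (TT2 a b D) = 1"
proof -
  have n: "nn2 a b D > 0" using nn2_pos[OF assms] .
  have "ell a b (TT2 a b D) = (fst (TT2 a b D) - D * snd (TT2 a b D)) / nn2 a b D"
    by (simp add: ell_Bf Bf_T2[OF assms])
  also have "\<dots> = ((1-D)^2/a + D^2/b) / (nn2 a b D)^2"
    using n assms unfolding TT2_def by (simp add: field_simps power2_eq_square)
  also have "\<dots> = 1" using n by (simp only: nn2_sq[OF assms(1,2), symmetric]) simp
  finally show ?thesis .
qed

lemma ell_T3: assumes "a>0" "b>0" shows "ell a b (TT3 a b D) = 1"
proof -
  have n: "nn3 a b D > 0" using nn3_pos[OF assms] .
  have "ell a b (TT3 a b D) = (snd (TT3 a b D) - D * fst (TT3 a b D)) / nn3 a b D"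
    by (simp add: ell_Bf Bf_T3[OF assms])
  also have "\<dots> = ((1-D)^2/a + 1/b) / (nn3 a b D)^2"
    using n assms unfolding TT3_def by (simp add: field_simps power2_eq_square)
  also have "\<dots> = 1" using n by (simp only: nn3_sq[OF assms(1,2), symmetric]) simp
  finally show ?thesis .
qed

lemma T2_eq: assumes "a>0" "b>0" "D>0" shows "T2 a b D = TT2 a b D"
  unfolding T2_def
proof (rule the_equality)
  have n: "nn2 a b D > 0" using nn2_pos[OF assms] .
  show "ell a b (TT2 a b D) = 1 \<and> (\<exists>t>0. ell_grad a b (TT2 a b D) = t *\<^sub>R (1, - D))"
  proof (intro conjI exI[of _ "2 / nn2 a b D"])
    show "ell a b (TT2 a b D) = 1" by (rule ell_T2[OF assms])
    show "2 / nn2 a b D > 0" using n by simp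
    show "ell_grad a b (TT2 a b D) = (2 / nn2 a b D) *\<^sub>R (1, - D)"
      using n assms unfolding ell_grad_def TT2_def by (simp add: field_simps)
  qed
next
  fix p assume h: "ell a b p = 1 \<and> (\<exists>t>0. ell_grad a b p = t *\<^sub>R (1, - D))"
  then obtain t where t: "t > 0" "ell_grad a b p = t *\<^sub>R (1, - D)" by blast
  have e1: "2 * a * fst p + 2 * b * (fst p - snd p) = t" and e2: "- 2 * b * (fst p - snd p) = - t * D"
    using t(2) unfolding ell_grad_def by auto
  have d: "fst p - snd p = t * D / (2*b)" using e2 assms by (simp add: field_simps)
  have f: "fst p = t * (1 - D) / (2*a)" using e1 d assms by (simp add: field_simps)
  have "1 = a * (fst p)^2 + b * (fst p - snd p)^2" using h unfolding ell_def by simp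
  also have "\<dots> = a * (t * (1 - D) / (2*a))^2 + b * (t * D / (2*b))^2" by (subst d, subst f, rule refl)
  also have "\<dots> = t^2/4 * ((1-D)^2/a + D^2/b)" using assms
    by (simp add: power_divide power_mult_distrib field_simps) (simp add: power2_eq_square algebra_simps)
  also have "\<dots> = (t * nn2 a b D / 2)^2" using nn2_sq[of a b D] assms by (simp add: power_mult_distrib power_divide)
  finally have "(t * nn2 a b D / 2)^2 = 1" by simp
  hence "t * nn2 a b D / 2 = 1" using t(1) nn2_pos[OF assms]
    by (metis abs_of_pos divide_pos_pos mult_pos_pos power2_eq_1_iff zero_less_numeral abs_neg_one abs_one zero_less_one_class.zero_le_one)
  hence tt: "t = 2 / nn2 a b D" using nn2_pos[OF assms] by (simp add: field_simps)
  have n: "nn2 a b D > 0" using nn2_pos[OF assms] .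
  have fp: "fst p = (1-D)/a/nn2 a b D" using f tt n assms by (simp add: field_simps)
  have "snd p = fst p - t * D / (2*b)" using d by simp
  also have "\<dots> = ((1-D)/a - D/b)/nn2 a b D" unfolding fp tt using n assms by (simp add: field_simps)
  finally have sp: "snd p = ((1-D)/a - D/b)/nn2 a b D" .
  show "p = TT2 a b D" unfolding TT2_def using fp sp by (simp add: prod_eq_iff)
qed

lemma T3_eq: assumes "a>0" "b>0" "D>0" shows "T3 a b D = TT3 a b D"
  unfolding T3_def
proof (rule the_equality)
  have n: "nn3 a b D > 0" using nn3_pos assms by auto
  show "ell a b (TT3 a b D) = 1 \<and> (\<exists>t>0. ell_grad a b (TT3 a b D) = t *\<^sub>R (- D, 1))"
  proof (intro conjI exI[of _ "2 / nn3 a b D"])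
    show "ell a b (TT3 a b D) = 1" using ell_T3 assms by auto
    show "2 / nn3 a b D > 0" using n by simp
    show "ell_grad a b (TT3 a b D) = (2 / nn3 a b D) *\<^sub>R (- D, 1)"
      using n assms unfolding ell_grad_def TT3_def by (simp add: field_simps)
  qed
next
  fix p assume h: "ell a b p = 1 \<and> (\<exists>t>0. ell_grad a b p = t *\<^sub>R (- D, 1))"
  then obtain t where t: "t > 0" "ell_grad a b p = t *\<^sub>R (- D, 1)" by blast
  have n: "nn3 a b D > 0" using nn3_pos assms by auto
  have e1: "2 * a * fst p + 2 * b * (fst p - snd p) = - t * D" and e2: "- 2 * b * (fst p - snd p) = t"
    using t(2) unfolding ell_grad_def by auto
  have d: "fst p - snd p = - t / (2*b)" using e2 assms by (simp add: field_simps)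
  have f: "fst p = t * (1 - D) / (2*a)" using e1 d assms by (simp add: field_simps)
  have "1 = a * (fst p)^2 + b * (fst p - snd p)^2" using h unfolding ell_def by simp
  also have "\<dots> = a * (t * (1 - D) / (2*a))^2 + b * (- t / (2*b))^2" by (subst d, subst f, rule refl)
  also have "\<dots> = t^2/4 * ((1-D)^2/a + 1/b)" using assms
    by (simp add: power_divide power_mult_distrib field_simps) (simp add: power2_eq_square algebra_simps)
  also have "\<dots> = (t * nn3 a b D / 2)^2" using nn3_sq[of a b D] assms by (simp add: power_mult_distrib power_divide)
  finally have "(t * nn3 a b D / 2)^2 = 1" by simp
  hence "t * nn3 a b D / 2 = 1" using t(1) nn3_pos[of a b D] assms
    by (metis abs_of_pos divide_pos_pos mult_pos_pos power2_eq_1_iff zero_less_numeral abs_neg_one abs_one zero_less_one_class.zero_le_one)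
  hence tt: "t = 2 / nn3 a b D" using n by (simp add: field_simps)
  have fp: "fst p = (1-D)/a/nn3 a b D" using f tt n assms by (simp add: field_simps)
  have "snd p = fst p + t / (2*b)" using d by simp
  also have "\<dots> = ((1-D)/a + 1/b)/nn3 a b D" unfolding fp tt using n assms by (simp add: field_simps)
  finally have sp: "snd p = ((1-D)/a + 1/b)/nn3 a b D" .
  show "p = TT3 a b D" unfolding TT3_def using fp sp by (simp add: prod_eq_iff)
qed

lemma T2_lin: assumes "a>0" "b>0" "D>0" shows "fst (TT2 a b D) - D * snd (TT2 a b D) = nn2 a b D"
proof -
  have "Bf a b (TT2 a b D) (TT2 a b D) = 1" using ell_T2[OF assms] by (simp add: ell_Bf)
  thus ?thesis using Bf_T2[OF assms] nn2_pos[OF assms] by (simp add: field_simps)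
qed

lemma T3_lin: assumes "a>0" "b>0" shows "snd (TT3 a b D) - D * fst (TT3 a b D) = nn3 a b D"
proof -
  have "Bf a b (TT3 a b D) (TT3 a b D) = 1" using ell_T3[OF assms] by (simp add: ell_Bf)
  thus ?thesis using Bf_T3[OF assms] nn3_pos[OF assms] by (simp add: field_simps)
qed

lemma grad_T2: assumes "a>0" "b>0" "D>0" shows "ell_grad a b (TT2 a b D) = (2 / nn2 a b D) *\<^sub>R (1, - D)"
  using nn2_pos[OF assms] assms unfolding ell_grad_def TT2_def by (simp add: field_simps)
lemma grad_T3: assumes "a>0" "b>0" shows "ell_grad a b (TT3 a b D) = (2 / nn3 a b D) *\<^sub>R (- D, 1)"
proof -
  have n: "nn3 a b D > 0" using nn3_pos[OF assms] .
  show ?thesis using n assms unfolding ell_grad_def TT3_def by (simp add: field_simps)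
qed

lemma K2_eq: assumes "a>0" "b>0" "D>0" shows "K2 a b D = (nn2 a b D, 0)"
proof -
  have n: "nn2 a b D > 0" using nn2_pos[OF assms] .
  have "(THE u. inner (ell_grad a b (T2 a b D)) ((u, 0) - T2 a b D) = 0) = nn2 a b D"
  proof (rule the_equality)
    show "inner (ell_grad a b (T2 a b D)) ((nn2 a b D, 0) - T2 a b D) = 0"
      unfolding T2_eq[OF assms] grad_T2[OF assms] using T2_lin[OF assms] n
      by (simp add: inner_prod_def algebra_simps)
  next
    fix u assume "inner (ell_grad a b (T2 a b D)) ((u, 0) - T2 a b D) = 0"
    hence "(2 / nn2 a b D) * (u - (fst (TT2 a b D) - D * snd (TT2 a b D))) = 0"
      unfolding T2_eq[OF assms] grad_T2[OF assms] using n by (simp add: inner_prod_def field_simps)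
    thus "u = nn2 a b D" using n T2_lin[OF assms] by simp
  qed
  thus ?thesis unfolding K2_def by simp
qed

lemma K3_eq: assumes "a>0" "b>0" "D>0" shows "K3 a b D = (0, nn3 a b D)"
proof -
  have n: "nn3 a b D > 0" using nn3_pos assms by auto
  have "(THE u. inner (ell_grad a b (T3 a b D)) ((0, u) - T3 a b D) = 0) = nn3 a b D"
  proof (rule the_equality)
    show "inner (ell_grad a b (T3 a b D)) ((0, nn3 a b D) - T3 a b D) = 0"
      unfolding T3_eq[OF assms] grad_T3[OF assms(1,2)] using T3_lin[OF assms(1,2)] n
      by (simp add: inner_prod_def algebra_simps)
  next
    fix u assume "inner (ell_grad a b (T3 a b D)) ((0, u) - T3 a b D) = 0"
    hence "(2 / nn3 a b D) * (u - (snd (TT3 a b D) - D * fst (TT3 a b D))) = 0"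
      unfolding T3_eq[OF assms] grad_T3[OF assms(1,2)] using n by (simp add: inner_prod_def field_simps)
    thus "u = nn3 a b D" using n T3_lin[OF assms(1,2)] by simp
  qed
  thus ?thesis unfolding K3_def by simp
qed

lemma CS_ident: "ell a b p * ell a b x - (Bf a b p x)^2 = a * b * (fst p * (fst x - snd x) - fst x * (fst p - snd p))^2"
  unfolding ell_def Bf_def by (simp add: power2_eq_square algebra_simps)

lemma CS: assumes "a > 0" "b > 0" shows "(Bf a b p x)^2 \<le> ell a b p * ell a b x"
proof -
  have "0 \<le> a * b * (fst p * (fst x - snd x) - fst x * (fst p - snd p))^2" using assms by simp
  thus ?thesis using CS_ident[of a b p x] by linarith
qed

lemma Bf_le1: assumes "a > 0" "b > 0" "ell a b p = 1" "ell a b x = 1" shows "Bf a b p x \<le> 1"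
proof -
  have "(Bf a b p x)^2 \<le> 1^2" using CS[OF assms(1,2), of p x] assms(3,4) by simp
  thus ?thesis by (cases "Bf a b p x \<le> 0") (auto intro: power2_le_imp_le)
qed

lemma Bf_lin1: "Bf a b (u *\<^sub>R p + v *\<^sub>R q) x = u * Bf a b p x + v * Bf a b q x"
  unfolding Bf_def by (simp add: algebra_simps)
lemma Bf_lin2: "Bf a b x (u *\<^sub>R p + v *\<^sub>R q) = u * Bf a b x p + v * Bf a b x q"
  unfolding Bf_def by (simp add: algebra_simps)
lemma Bf_add2: "Bf a b x (p + q) = Bf a b x p + Bf a b x q"
  unfolding Bf_def by (simp add: algebra_simps)
lemma Bf_scale2: "Bf a b x (u *\<^sub>R p) = u * Bf a b x p"
  unfolding Bf_def by (simp add: algebra_simps)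
lemma ell_scale: "ell a b (u *\<^sub>R p) = u^2 * ell a b p"
  unfolding ell_def by (simp add: power2_eq_square algebra_simps)
lemma ell_pos: assumes "a > 0" "b > 0" "x \<noteq> 0" shows "ell a b x > 0"
proof (rule ccontr)
  assume "\<not> ell a b x > 0"
  hence "a * (fst x)^2 + b * (fst x - snd x)^2 \<le> 0" unfolding ell_def by simp
  moreover have "a * (fst x)^2 \<ge> 0" "b * (fst x - snd x)^2 \<ge> 0" using assms by auto
  ultimately have "a * (fst x)^2 = 0" "b * (fst x - snd x)^2 = 0" by linarith+
  hence "fst x = 0" "snd x = 0" using assms by auto
  thus False using assms(3) by (simp add: prod_eq_iff)
qed

definition cr :: "real \<times> real \<Rightarrow> real \<times> real \<Rightarrow> real" where
  "cr u v = fst u * snd v - snd u * fst v"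
definition dd :: "real \<Rightarrow> real \<Rightarrow> real \<Rightarrow> real" where
  "dd a b D = cr (TT2 a b D) (TT3 a b D)"
definition cA :: "real \<Rightarrow> real \<Rightarrow> real \<Rightarrow> real \<times> real \<Rightarrow> real" where
  "cA a b D x = cr x (TT3 a b D) / dd a b D"
definition cB :: "real \<Rightarrow> real \<Rightarrow> real \<Rightarrow> real \<times> real \<Rightarrow> real" where
  "cB a b D x = cr (TT2 a b D) x / dd a b D"

lemma dd_neg: assumes "a>0" "b>0" "D>1" shows "dd a b D < 0"
proof -
  have n2: "nn2 a b D > 0" using nn2_pos assms by auto
  have n3: "nn3 a b D > 0" using nn3_pos assms by auto
  have "dd a b D = - ((D-1)/a) * (1 + D) / (b * nn2 a b D * nn3 a b D)"
    unfolding dd_def cr_def TT2_def TT3_def using assms n2 n3 by (simp add: field_simps)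
  also have "\<dots> < 0" using assms n2 n3 by (simp add: divide_neg_pos)
  finally show ?thesis .
qed

lemma decomp_gen: assumes "cr p q \<noteq> 0" shows "x = (cr x q / cr p q) *\<^sub>R p + (cr p x / cr p q) *\<^sub>R q"
proof -
  obtain p1 p2 q1 q2 x1 x2 where e: "p = (p1,p2)" "q = (q1,q2)" "x = (x1,x2)" by (metis prod.collapse)
  define d where "d = p1 * q2 - p2 * q1"
  have d: "d \<noteq> 0" using assms e unfolding cr_def d_def by simp
  have "(x1 * q2 - x2 * q1) / d * p1 + (p1 * x2 - p2 * x1) / d * q1 = ((x1 * q2 - x2 * q1) * p1 + (p1 * x2 - p2 * x1) * q1) / d"
    by (simp add: add_divide_distrib)
  also have "(x1 * q2 - x2 * q1) * p1 + (p1 * x2 - p2 * x1) * q1 = x1 * d" unfolding d_def by (simp add: algebra_simps)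
  finally have 1: "x1 = (x1 * q2 - x2 * q1) / d * p1 + (p1 * x2 - p2 * x1) / d * q1" using d by simp
  have "(x1 * q2 - x2 * q1) / d * p2 + (p1 * x2 - p2 * x1) / d * q2 = ((x1 * q2 - x2 * q1) * p2 + (p1 * x2 - p2 * x1) * q2) / d"
    by (simp add: add_divide_distrib)
  also have "(x1 * q2 - x2 * q1) * p2 + (p1 * x2 - p2 * x1) * q2 = x2 * d" unfolding d_def by (simp add: algebra_simps)
  finally have 2: "x2 = (x1 * q2 - x2 * q1) / d * p2 + (p1 * x2 - p2 * x1) / d * q2" using d by simp
  note 1 2
  thus ?thesis using 1 2 unfolding e cr_def d_def by simp
qed

lemma decomp: assumes "dd a b D \<noteq> 0" shows "x = cA a b D x *\<^sub>R TT2 a b D + cB a b D x *\<^sub>R TT3 a b D"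
  using decomp_gen[of "TT2 a b D" "TT3 a b D" x] assms unfolding cA_def cB_def dd_def by simp

lemma cA_lin: assumes "dd a b D \<noteq> 0" shows "cA a b D (u *\<^sub>R TT2 a b D + v *\<^sub>R TT3 a b D) = u"
  using assms unfolding cA_def dd_def cr_def by (simp add: field_simps)
lemma cB_lin: assumes "dd a b D \<noteq> 0" shows "cB a b D (u *\<^sub>R TT2 a b D + v *\<^sub>R TT3 a b D) = v"
  using assms unfolding cB_def dd_def cr_def by (simp add: field_simps)

definition Arc :: "real \<Rightarrow> real \<Rightarrow> real \<Rightarrow> (real \<times> real) set" where
  "Arc a b D = {q. ell a b q = 1 \<and> cA a b D q \<ge> 0 \<and> cB a b D q \<ge> 0}"

lemma cA_T2: "dd a b D \<noteq> 0 \<Longrightarrow> cA a b D (TT2 a b D) = 1"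
  using cA_lin[of a b D 1 0] by simp
lemma cB_T2: "dd a b D \<noteq> 0 \<Longrightarrow> cB a b D (TT2 a b D) = 0"
  using cB_lin[of a b D 1 0] by simp
lemma cA_T3: "dd a b D \<noteq> 0 \<Longrightarrow> cA a b D (TT3 a b D) = 0"
  using cA_lin[of a b D 0 1] by simp
lemma cB_T3: "dd a b D \<noteq> 0 \<Longrightarrow> cB a b D (TT3 a b D) = 1"
  using cB_lin[of a b D 0 1] by simp

lemma sq1: "(c::real) \<ge> 0 \<Longrightarrow> c^2 = 1 \<Longrightarrow> c = 1"
  by (metis abs_of_nonneg power2_eq_1_iff abs_neg_one abs_one)

lemma axis3: assumes "a>0" "b>0" "D>1" "ell a b q = 1" "cA a b D q = 0" "cB a b D q \<ge> 0"
  shows "q = TT3 a b D"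
proof -
  have dn: "dd a b D \<noteq> 0" using dd_neg assms by force
  have q: "q = cB a b D q *\<^sub>R TT3 a b D" using decomp[OF dn, of q] assms(5) by simp
  have "ell a b q = (cB a b D q)^2" by (subst q, simp add: ell_scale ell_T3 assms)
  hence "cB a b D q = 1" using sq1 assms by auto
  thus ?thesis using q by simp
qed

lemma axis2: assumes "a>0" "b>0" "D>1" "ell a b q = 1" "cB a b D q = 0" "cA a b D q \<ge> 0"
  shows "q = TT2 a b D"
proof -
  have dn: "dd a b D \<noteq> 0" using dd_neg assms by force
  have q: "q = cA a b D q *\<^sub>R TT2 a b D" using decomp[OF dn, of q] assms(5) by simp
  have "ell a b q = (cA a b D q)^2" using assms by (subst q, simp add: ell_scale ell_T2)
  hence "cA a b D q = 1" using sq1 assms by auto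
  thus ?thesis using q by simp
qed

definition P0 :: "real \<Rightarrow> real \<times> real" where "P0 a = (- 1 / sqrt a, - 1 / sqrt a)"

lemma ell_P0: "a > 0 \<Longrightarrow> ell a b (P0 a) = 1"
  unfolding ell_def P0_def by (simp add: power_divide)

lemma P0_cone: assumes "a>0" "b>0" "D>1" shows "cA a b D (P0 a) > 0" "cB a b D (P0 a) > 0"
proof -
  have n2: "nn2 a b D > 0" using nn2_pos assms by auto
  have n3: "nn3 a b D > 0" using nn3_pos assms by auto
  have dn: "dd a b D < 0" using dd_neg assms by auto
  have sa: "sqrt a > 0" using assms by simp
  have "cr (P0 a) (TT3 a b D) = (- 1 / sqrt a) * (snd (TT3 a b D) - fst (TT3 a b D))"
    unfolding cr_def P0_def by (simp add: algebra_simps)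
  also have "snd (TT3 a b D) - fst (TT3 a b D) = 1 / (b * nn3 a b D)"
    unfolding TT3_def using n3 assms by (simp add: field_simps)
  finally have "cr (P0 a) (TT3 a b D) < 0" using sa n3 assms by (simp add: mult_neg_pos)
  thus "cA a b D (P0 a) > 0" unfolding cA_def using dn by (simp add: divide_neg_neg)
  have "cr (TT2 a b D) (P0 a) = (- 1 / sqrt a) * (fst (TT2 a b D) - snd (TT2 a b D))"
    unfolding cr_def P0_def by (simp add: algebra_simps)
  also have "fst (TT2 a b D) - snd (TT2 a b D) = D / (b * nn2 a b D)"
    unfolding TT2_def using n2 assms by (simp add: field_simps)
  finally have "cr (TT2 a b D) (P0 a) < 0" using sa n2 assms by (simp add: mult_neg_pos)
  thus "cB a b D (P0 a) > 0" unfolding cB_def using dn by (simp add: divide_neg_neg)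
qed

lemma cont_ell[continuous_intros]: "continuous_on S f \<Longrightarrow> continuous_on S (\<lambda>x. ell a b (f x))"
  unfolding ell_def by (intro continuous_intros)

lemma cont_cA: "continuous_on UNIV (cA a b D)"
  unfolding cA_def cr_def divide_inverse by (intro continuous_intros)
lemma cont_cB: "continuous_on UNIV (cB a b D)"
  unfolding cB_def cr_def divide_inverse by (intro continuous_intros)

lemma ell_arc_eq: assumes "a>0" "b>0" "D>1" shows "ell_arc a b D = Arc a b D"
proof -
  have D0: "D > 0" using assms by simp
  have dn: "dd a b D \<noteq> 0" using dd_neg assms by force
  define S where "S = {p. ell a b p = 1} - {TT2 a b D, TT3 a b D}"
  define C where "C = connected_component_set S (P0 a)"
  have ea: "ell_arc a b D = C \<union> {TT2 a b D, TT3 a b D}"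
    unfolding ell_arc_def C_def S_def T2_eq[OF assms(1,2) D0] T3_eq[OF assms(1,2) D0] P0_def by simp
  have P0S: "P0 a \<in> S" unfolding S_def using ell_P0[OF assms(1), of b] P0_cone[OF assms] cA_T3[OF dn] cB_T2[OF dn]
    by auto
  have T2A: "TT2 a b D \<in> Arc a b D" unfolding Arc_def using ell_T2[OF assms(1,2) D0] cA_T2[OF dn] cB_T2[OF dn] by simp
  have T3A: "TT3 a b D \<in> Arc a b D" unfolding Arc_def using ell_T3[OF assms(1,2)] cA_T3[OF dn] cB_T3[OF dn] by simp
  define U1 where "U1 = {x. 0 < cA a b D x \<and> 0 < cB a b D x}"
  define U2 where "U2 = {x. cA a b D x < 0 \<or> cB a b D x < 0}"
  have oU1: "open U1" unfolding U1_def
    by (intro open_Collect_conj open_Collect_less continuous_on_const cont_cA cont_cB)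
  have oU2: "open U2" unfolding U2_def
    by (intro open_Collect_disj open_Collect_less continuous_on_const cont_cA cont_cB)
  have SU: "S \<subseteq> U1 \<union> U2"
  proof
    fix p assume p: "p \<in> S"
    show "p \<in> U1 \<union> U2"
    proof (rule ccontr)
      assume "p \<notin> U1 \<union> U2"
      hence h: "cA a b D p \<ge> 0" "cB a b D p \<ge> 0" "cA a b D p = 0 \<or> cB a b D p = 0"
        unfolding U1_def U2_def by auto
      have "ell a b p = 1" using p unfolding S_def by auto
      hence "p = TT3 a b D \<or> p = TT2 a b D" using h axis2[OF assms] axis3[OF assms] by blast
      thus False using p unfolding S_def by auto
    qed
  qed
  have sub1: "C \<subseteq> Arc a b D"
  proof -
    have cC: "connected C" unfolding C_def by simp
    have CS: "C \<subseteq> S" unfolding C_def by (rule connected_component_subset)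
    have P0C: "P0 a \<in> C" unfolding C_def using P0S by simp
    have "U1 \<inter> U2 \<inter> C = {}" unfolding U1_def U2_def by auto
    from connectedD[OF cC oU1 oU2 this] CS SU have "U1 \<inter> C = {} \<or> U2 \<inter> C = {}" by blast
    moreover have "P0 a \<in> U1" unfolding U1_def using P0_cone[OF assms] by simp
    ultimately have "U2 \<inter> C = {}" using P0C by blast
    show ?thesis
    proof
      fix q assume qC: "q \<in> C"
      hence qS: "q \<in> S" using CS by blast
      hence "q \<in> U1" using SU \<open>U2 \<inter> C = {}\<close> qC by blast
      thus "q \<in> Arc a b D" using qS unfolding Arc_def S_def U1_def by auto
    qed
  qed
  define w where "w = (\<lambda>\<mu>::real. \<mu> *\<^sub>R TT2 a b D + (1 - \<mu>) *\<^sub>R TT3 a b D)"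
  define h where "h = (\<lambda>\<mu>. inverse (sqrt (ell a b (w \<mu>))) *\<^sub>R w \<mu>)"
  have wne: "w \<mu> \<noteq> 0" if "\<mu> \<in> {0<..<1}" for \<mu>
  proof
    assume "w \<mu> = 0"
    hence "cA a b D (w \<mu>) = 0" unfolding cA_def cr_def by simp
    moreover have "cA a b D (w \<mu>) = \<mu>" unfolding w_def by (rule cA_lin[OF dn])
    ultimately show False using that by simp
  qed
  have wpos: "ell a b (w \<mu>) > 0" if "\<mu> \<in> {0<..<1}" for \<mu> using ell_pos[OF assms(1,2) wne[OF that]] .
  have hS: "h \<mu> \<in> S" if mu: "\<mu> \<in> {0<..<1}" for \<mu>
  proof -
    define r where "r = inverse (sqrt (ell a b (w \<mu>)))"
    have r: "r > 0" unfolding r_def using wpos[OF mu] by simp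
    have hh: "h \<mu> = (r * \<mu>) *\<^sub>R TT2 a b D + (r * (1 - \<mu>)) *\<^sub>R TT3 a b D"
      unfolding h_def r_def[symmetric] unfolding w_def by (simp add: scaleR_add_right)
    have "ell a b (h \<mu>) = r^2 * ell a b (w \<mu>)" unfolding h_def r_def[symmetric] by (simp add: ell_scale)
    also have "\<dots> = 1" unfolding r_def using wpos[OF mu] by (simp add: power_inverse)
    finally have e1: "ell a b (h \<mu>) = 1" .
    have "cA a b D (h \<mu>) = r * \<mu>" "cB a b D (h \<mu>) = r * (1 - \<mu>)" unfolding hh using cA_lin[OF dn] cB_lin[OF dn] by auto
    hence "cA a b D (h \<mu>) > 0" "cB a b D (h \<mu>) > 0" using r mu by auto
    thus ?thesis unfolding S_def using e1 cA_T3[OF dn] cB_T2[OF dn] by auto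
  qed
  have inIm: "q \<in> h ` {0<..<1}" if q: "ell a b q = 1" "cA a b D q > 0" "cB a b D q > 0" for q
  proof -
    define sA where "sA = cA a b D q"
    define sB where "sB = cB a b D q"
    have sp: "sA + sB > 0" using q unfolding sA_def sB_def by simp
    have qd: "q = sA *\<^sub>R TT2 a b D + sB *\<^sub>R TT3 a b D" unfolding sA_def sB_def by (rule decomp[OF dn])
    define \<mu> where "\<mu> = sA / (sA + sB)"
    have mu: "\<mu> \<in> {0<..<1}" unfolding \<mu>_def using q sp unfolding sA_def sB_def by (auto simp: field_simps)
    have i1: "inverse (sA + sB) *\<^sub>R q = (sA / (sA + sB)) *\<^sub>R TT2 a b D + (sB / (sA + sB)) *\<^sub>R TT3 a b D"
      by (subst qd) (simp add: scaleR_add_right divide_inverse mult.commute)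
    have i2: "1 - sA / (sA + sB) = sB / (sA + sB)" using sp by (simp add: field_simps)
    have wq: "w \<mu> = inverse (sA + sB) *\<^sub>R q" unfolding i1 w_def \<mu>_def i2 by simp
    have "ell a b (w \<mu>) = (inverse (sA + sB))^2" unfolding wq ell_scale q(1) by simp
    hence "sqrt (ell a b (w \<mu>)) = inverse (sA + sB)" using sp by simp
    hence "h \<mu> = q" unfolding h_def using wq sp by simp
    thus ?thesis using mu by blast
  qed
  have sub2: "h ` {0<..<1} \<subseteq> C"
    unfolding C_def
  proof (rule connected_component_maximal)
    show "P0 a \<in> h ` {0<..<1}" using inIm ell_P0[OF assms(1)] P0_cone[OF assms] by blast
    show "h ` {0<..<1} \<subseteq> S" using hS by blast
    have cw: "continuous_on {0<..<1} w" unfolding w_def by (intro continuous_intros)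
    have "continuous_on {0<..<1} h" unfolding h_def
      by (intro continuous_intros cw) (use wpos in force)
    thus "connected (h ` {0<..<1})" by (rule connected_continuous_image) simp
  qed
  show ?thesis
  proof
    show "ell_arc a b D \<subseteq> Arc a b D" unfolding ea using sub1 T2A T3A by blast
    show "Arc a b D \<subseteq> ell_arc a b D"
    proof
      fix q assume q: "q \<in> Arc a b D"
      hence q': "ell a b q = 1" "cA a b D q \<ge> 0" "cB a b D q \<ge> 0" unfolding Arc_def by auto
      show "q \<in> ell_arc a b D"
      proof (cases "cA a b D q = 0 \<or> cB a b D q = 0")
        case True
        hence "q = TT3 a b D \<or> q = TT2 a b D" using q' axis2[OF assms] axis3[OF assms] by blast
        thus ?thesis unfolding ea by blast
      next
        case False
        hence "q \<in> h ` {0<..<1}" using q' inIm by auto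
        thus ?thesis unfolding ea using sub2 by blast
      qed
    qed
  qed
qed

lemma contour_eq: assumes "a>0" "b>0" "D>1"
  shows "contour_L a b D = closed_segment (0, nn3 a b D) (nn2 a b D, 0) \<union> closed_segment (nn2 a b D, 0) (TT2 a b D)
     \<union> Arc a b D \<union> closed_segment (TT3 a b D) (0, nn3 a b D)"
proof -
  have D0: "D > 0" using assms by simp
  show ?thesis unfolding contour_L_def K2_eq[OF assms(1,2) D0] K3_eq[OF assms(1,2) D0]
      T2_eq[OF assms(1,2) D0] T3_eq[OF assms(1,2) D0] ell_arc_eq[OF assms] ..
qed

definition GG :: "real \<Rightarrow> real \<Rightarrow> real \<Rightarrow> real" where "GG a b D = (1-D)^2/a - D/b"

lemma T2_cross: assumes "a>0" "b>0" "D>0" shows "snd (TT2 a b D) - D * fst (TT2 a b D) = GG a b D / nn2 a b D"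
proof -
  have "snd (TT2 a b D) - D * fst (TT2 a b D) = (((1-D)/a - D/b) - D * ((1-D)/a)) / nn2 a b D"
    unfolding TT2_def using nn2_pos[OF assms] assms by (simp add: field_simps)
  also have "((1-D)/a - D/b) - D * ((1-D)/a) = GG a b D" unfolding GG_def using assms
    by (simp add: divide_simps power2_eq_square) (simp add: algebra_simps)
  finally show ?thesis .
qed
lemma T3_cross: assumes "a>0" "b>0" shows "fst (TT3 a b D) - D * snd (TT3 a b D) = GG a b D / nn3 a b D"
proof -
  have "fst (TT3 a b D) - D * snd (TT3 a b D) = ((1-D)/a - D * ((1-D)/a + 1/b)) / nn3 a b D"
    unfolding TT3_def by (simp add: diff_divide_distrib)
  also have "(1-D)/a - D * ((1-D)/a + 1/b) = GG a b D" unfolding GG_def using assms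
    by (simp add: divide_simps power2_eq_square) (simp add: algebra_simps)
  finally show ?thesis .
qed

lemma ineq_K2: assumes "a>0" "b>0" "D\<ge>1" shows "- D * (nn2 a b D)^2 \<le> GG a b D"
proof -
  have "- D * (nn2 a b D)^2 = - D * (1-D)^2/a - D^3/b" unfolding nn2_sq[OF assms(1,2), where D=D] using assms
    by (simp add: divide_simps power3_eq_cube power2_eq_square) (simp add: algebra_simps)
  moreover have "GG a b D - (- D * (1-D)^2/a - D^3/b) = (1 + D) * (1-D)^2/a + D * (D^2 - 1) / b"
    unfolding GG_def by (simp add: add_divide_distrib diff_divide_distrib power2_eq_square power3_eq_cube algebra_simps)
  moreover have "(1 + D) * (1-D)^2/a \<ge> 0" using assms by simp
  moreover have "D * (D^2 - 1) / b \<ge> 0" using assms by (simp add: one_le_power)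
  ultimately show ?thesis by linarith
qed

lemma ineq_K3: assumes "a>0" "b>0" "D\<ge>1" shows "- D * (nn3 a b D)^2 \<le> GG a b D"
proof -
  have "GG a b D - (- D * (nn3 a b D)^2) = (1 + D) * (1-D)^2/a"
    unfolding GG_def nn3_sq[OF assms(1,2), where D=D]
    by (simp add: add_divide_distrib diff_divide_distrib power2_eq_square power3_eq_cube algebra_simps)
  moreover have "(1 + D) * (1-D)^2/a \<ge> 0" using assms by simp
  ultimately show ?thesis by linarith
qed

lemma Bf_le_pts: assumes "a>0" "b>0" "D>1" "q \<in> Arc a b D"
  shows "Bf a b q (nn2 a b D, 0) \<le> 1" "Bf a b q (0, nn3 a b D) \<le> 1"
    "Bf a b q (TT2 a b D) \<le> 1" "Bf a b q (TT3 a b D) \<le> 1"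
proof -
  have D0: "D > 0" using assms by simp
  have dn: "dd a b D \<noteq> 0" using dd_neg assms by force
  have n2: "nn2 a b D > 0" using nn2_pos assms by auto
  have n3: "nn3 a b D > 0" using nn3_pos assms by auto
  have q: "ell a b q = 1" "cA a b D q \<ge> 0" "cB a b D q \<ge> 0" using assms(4) unfolding Arc_def by auto
  define \<alpha> where "\<alpha> = cA a b D q"
  define \<beta> where "\<beta> = cB a b D q"
  have qd: "q = \<alpha> *\<^sub>R TT2 a b D + \<beta> *\<^sub>R TT3 a b D" unfolding \<alpha>_def \<beta>_def by (rule decomp[OF dn])
  show 3: "Bf a b q (TT2 a b D) \<le> 1" using Bf_le1[OF assms(1,2) q(1) ell_T2[OF assms(1,2) D0]] .
  show 4: "Bf a b q (TT3 a b D) \<le> 1" using Bf_le1[OF assms(1,2) q(1) ell_T3[OF assms(1,2)]] .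
  have b22: "Bf a b (TT2 a b D) (TT2 a b D) = 1" using ell_T2[OF assms(1,2) D0] by (simp add: ell_Bf)
  have b33: "Bf a b (TT3 a b D) (TT3 a b D) = 1" using ell_T3[OF assms(1,2)] by (simp add: ell_Bf)
  have e3: "Bf a b q (TT2 a b D) = \<alpha> + \<beta> * (GG a b D / nn2 a b D / nn3 a b D)"
    unfolding qd Bf_lin1 b22 Bf_T3[OF assms(1,2)] T2_cross[OF assms(1,2) D0] by simp
  have e2: "Bf a b q (nn2 a b D, 0) = \<alpha> + \<beta> * (- D * nn2 a b D / nn3 a b D)"
    unfolding qd Bf_lin1 Bf_T2[OF assms(1,2) D0] Bf_T3[OF assms(1,2)] using n2 by simp
  have "- D * nn2 a b D / nn3 a b D \<le> GG a b D / nn2 a b D / nn3 a b D"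
  proof -
    have "- D * nn2 a b D \<le> GG a b D / nn2 a b D"
      using ineq_K2[of a b D] assms n2 by (simp add: field_simps power2_eq_square)
    from divide_right_mono[OF this, of "nn3 a b D"] show ?thesis using n3 by simp
  qed
  hence "\<beta> * (- D * nn2 a b D / nn3 a b D) \<le> \<beta> * (GG a b D / nn2 a b D / nn3 a b D)"
    using q(3) unfolding \<beta>_def by (rule mult_left_mono)
  thus "Bf a b q (nn2 a b D, 0) \<le> 1" using 3 e2 e3 by linarith
  have e4: "Bf a b q (TT3 a b D) = \<alpha> * (GG a b D / nn2 a b D / nn3 a b D) + \<beta>"
    unfolding qd Bf_lin1 b33 Bf_T2[OF assms(1,2) D0] T3_cross[OF assms(1,2)] by simp
  have e5: "Bf a b q (0, nn3 a b D) = \<alpha> * (- D * nn3 a b D / nn2 a b D) + \<beta>"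
    unfolding qd Bf_lin1 Bf_T2[OF assms(1,2) D0] Bf_T3[OF assms(1,2)] using n3 by simp
  have "- D * nn3 a b D / nn2 a b D \<le> GG a b D / nn2 a b D / nn3 a b D"
  proof -
    have "- D * nn3 a b D \<le> GG a b D / nn3 a b D"
      using ineq_K3[of a b D] assms n3 by (simp add: field_simps power2_eq_square)
    from divide_right_mono[OF this, of "nn2 a b D"] show ?thesis using n2 by (simp add: mult.commute)
  qed
  hence "\<alpha> * (- D * nn3 a b D / nn2 a b D) \<le> \<alpha> * (GG a b D / nn2 a b D / nn3 a b D)"
    using q(2) unfolding \<alpha>_def by (rule mult_left_mono)
  thus "Bf a b q (0, nn3 a b D) \<le> 1" using 4 e4 e5 by linarith
qed

lemma seg_le: assumes "x \<in> closed_segment u v" "Bf a b q u \<le> 1" "Bf a b q v \<le> 1" shows "Bf a b q x \<le> 1"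
proof -
  obtain t where t: "0 \<le> t" "t \<le> 1" "x = (1 - t) *\<^sub>R u + t *\<^sub>R v" using assms(1) unfolding closed_segment_def by blast
  have "Bf a b q x = (1 - t) * Bf a b q u + t * Bf a b q v" unfolding t(3) Bf_lin2 ..
  also have "\<dots> \<le> (1 - t) * 1 + t * 1" using t assms by (intro add_mono mult_left_mono) auto
  finally show ?thesis by simp
qed

lemma seg_eq: assumes "x \<in> closed_segment u v" "Bf a b q u = 1" "Bf a b q v = 1" shows "Bf a b q x = 1"
proof -
  obtain t where t: "0 \<le> t" "t \<le> 1" "x = (1 - t) *\<^sub>R u + t *\<^sub>R v" using assms(1) unfolding closed_segment_def by blast
  show ?thesis unfolding t(3) Bf_lin2 assms by simp
qed

lemma lemA: assumes "a>0" "b>0" "D>1" "q \<in> Arc a b D" "x \<in> contour_L a b D" shows "Bf a b q x \<le> 1"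
proof -
  note p = Bf_le_pts[OF assms(1-4)]
  have qe: "ell a b q = 1" using assms(4) unfolding Arc_def by auto
  show ?thesis using assms(5) unfolding contour_eq[OF assms(1-3)]
  proof (elim UnE)
    assume "x \<in> Arc a b D"
    hence "ell a b x = 1" unfolding Arc_def by auto
    thus ?thesis using Bf_le1[OF assms(1,2) qe] by simp
  qed (auto intro: seg_le p)
qed

lemma lemB: assumes "a>0" "b>0" "D>1" "p \<in> contour_L a b D" "min (fst p) (snd p) < 0"
  shows "\<exists>q \<in> Arc a b D. Bf a b q p = 1"
proof -
  have D0: "D > 0" using assms by simp
  have dn: "dd a b D \<noteq> 0" using dd_neg assms by force
  have n2: "nn2 a b D > 0" using nn2_pos assms by auto
  have n3: "nn3 a b D > 0" using nn3_pos assms by auto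
  have T2A: "TT2 a b D \<in> Arc a b D" unfolding Arc_def using ell_T2[OF assms(1,2) D0] cA_T2[OF dn] cB_T2[OF dn] by simp
  have T3A: "TT3 a b D \<in> Arc a b D" unfolding Arc_def using ell_T3[OF assms(1,2)] cA_T3[OF dn] cB_T3[OF dn] by simp
  have b22: "Bf a b (TT2 a b D) (TT2 a b D) = 1" using ell_T2[OF assms(1,2) D0] by (simp add: ell_Bf)
  have b33: "Bf a b (TT3 a b D) (TT3 a b D) = 1" using ell_T3[OF assms(1,2)] by (simp add: ell_Bf)
  have b2k: "Bf a b (TT2 a b D) (nn2 a b D, 0) = 1" using Bf_T2[OF assms(1,2) D0] n2 by simp
  have b3k: "Bf a b (TT3 a b D) (0, nn3 a b D) = 1" using Bf_T3[OF assms(1,2)] n3 by simp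
  show ?thesis using assms(4) unfolding contour_eq[OF assms(1-3)]
  proof (elim UnE)
    assume "p \<in> closed_segment (0, nn3 a b D) (nn2 a b D, 0)"
    then obtain t where t: "0 \<le> t" "t \<le> 1" "p = (1 - t) *\<^sub>R (0, nn3 a b D) + t *\<^sub>R (nn2 a b D, 0)"
      unfolding closed_segment_def by blast
    have "fst p \<ge> 0" "snd p \<ge> 0" unfolding t(3) using t n2 n3 by auto
    thus ?thesis using assms(5) by linarith
  next
    assume "p \<in> closed_segment (nn2 a b D, 0) (TT2 a b D)"
    thus ?thesis using T2A seg_eq[OF _ b2k b22] by blast
  next
    assume "p \<in> closed_segment (TT3 a b D) (0, nn3 a b D)"
    thus ?thesis using T3A seg_eq[OF _ b33 b3k] by blast
  next
    assume "p \<in> Arc a b D"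
    moreover hence "Bf a b p p = 1" unfolding Arc_def by (simp add: ell_Bf[symmetric])
    ultimately show ?thesis by blast
  qed
qed

lemma scale_min: "(c::real) > 0 \<Longrightarrow> min (fst (x::real\<times>real)) (snd x) < 0 \<Longrightarrow> min (fst (c *\<^sub>R x)) (snd (c *\<^sub>R x)) < 0"
  by (auto simp: min_less_iff_disj mult_pos_neg)

lemma phi_unique: assumes "a>0" "b>0" "D>1" "min (fst x) (snd x) < 0" "s > 0" "inverse s *\<^sub>R x \<in> contour_L a b D"
  shows "phi a b D x = s"
proof -
  have x0: "x \<noteq> 0" using assms(4) by auto
  have "(THE s. s > 0 \<and> inverse s *\<^sub>R x \<in> contour_L a b D) = s"
  proof (rule the_equality)
    show "s > 0 \<and> inverse s *\<^sub>R x \<in> contour_L a b D" using assms by simp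
  next
    fix s' assume s': "s' > 0 \<and> inverse s' *\<^sub>R x \<in> contour_L a b D"
    obtain q' where q': "q' \<in> Arc a b D" "Bf a b q' (inverse s' *\<^sub>R x) = 1"
      using lemB[OF assms(1-3) conjunct2[OF s'] scale_min[OF _ assms(4)]] s' by auto
    have e': "Bf a b q' x = s'" using q'(2) s' unfolding Bf_scale2 by (simp add: field_simps)
    have "Bf a b q' (inverse s *\<^sub>R x) \<le> 1" using lemA[OF assms(1-3) q'(1) assms(6)] .
    hence le1: "s' \<le> s" unfolding Bf_scale2 e' using assms(5) by (simp add: field_simps)
    obtain q where q: "q \<in> Arc a b D" "Bf a b q (inverse s *\<^sub>R x) = 1"
      using lemB[OF assms(1-3) assms(6) scale_min[OF _ assms(4)]] assms(5) by auto
    have e: "Bf a b q x = s" using q(2) assms(5) unfolding Bf_scale2 by (simp add: field_simps)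
    have "Bf a b q (inverse s' *\<^sub>R x) \<le> 1" using lemA[OF assms(1-3) q(1) conjunct2[OF s']] .
    hence "s \<le> s'" unfolding Bf_scale2 e using s' by (simp add: field_simps)
    thus "s' = s" using le1 by simp
  qed
  thus ?thesis unfolding phi_def using x0 by simp
qed

lemma phi_props: assumes "a>0" "b>0" "D>1" "min (fst x) (snd x) < 0" "s > 0" "inverse s *\<^sub>R x \<in> contour_L a b D"
  shows "\<And>q. q \<in> Arc a b D \<Longrightarrow> Bf a b q x \<le> phi a b D x"
    and "\<exists>q \<in> Arc a b D. Bf a b q x = phi a b D x"
proof -
  have ph: "phi a b D x = s" by (rule phi_unique[OF assms])
  fix q assume q: "q \<in> Arc a b D"
  have "Bf a b q (inverse s *\<^sub>R x) \<le> 1" using lemA[OF assms(1-3) q assms(6)] .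
  thus "Bf a b q x \<le> phi a b D x" unfolding ph Bf_scale2 using assms(5) by (simp add: field_simps)
next
  have ph: "phi a b D x = s" by (rule phi_unique[OF assms])
  obtain q where q: "q \<in> Arc a b D" "Bf a b q (inverse s *\<^sub>R x) = 1"
    using lemB[OF assms(1-3) assms(6) scale_min[OF _ assms(4)]] assms(5) by auto
  have e: "Bf a b q x = s" using q(2) assms(5) unfolding Bf_scale2 by (simp add: field_simps)
  thus "\<exists>q \<in> Arc a b D. Bf a b q x = phi a b D x" using q(1) ph by auto
qed

lemma seg_mem: assumes "A \<ge> 0" "B \<ge> 0" "A + B > 0" "x = A *\<^sub>R u + B *\<^sub>R v"
  shows "inverse (A + B) *\<^sub>R x \<in> closed_segment u v"
proof -
  have "inverse (A + B) *\<^sub>R x = (1 - B / (A + B)) *\<^sub>R u + (B / (A + B)) *\<^sub>R v"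
  proof -
    have "1 - B / (A + B) = A / (A + B)" using assms(3) by (simp add: field_simps)
    thus ?thesis unfolding assms(4) by (simp add: scaleR_add_right divide_inverse mult.commute)
  qed
  moreover have "0 \<le> B / (A + B)" "B / (A + B) \<le> 1" using assms by (auto simp: field_simps)
  ultimately show ?thesis unfolding closed_segment_def by blast
qed

lemma cA_scale: "cA a b D (c *\<^sub>R x) = c * cA a b D x"
  unfolding cA_def cr_def by (simp add: algebra_simps)
lemma cB_scale: "cB a b D (c *\<^sub>R x) = c * cB a b D x"
  unfolding cB_def cr_def by (simp add: algebra_simps)

lemma TT2_P: assumes "a>0" shows "TT2 a b D = (- ((D-1)/a) / nn2 a b D, (- ((D-1)/a) - D/b) / nn2 a b D)"
  unfolding TT2_def by (simp add: minus_divide_left)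
lemma TT3_P: assumes "a>0" shows "TT3 a b D = (- ((D-1)/a) / nn3 a b D, (- ((D-1)/a) + 1/b) / nn3 a b D)"
  unfolding TT3_def by (simp add: minus_divide_left)

lemma exist_i: assumes "a>0" "b>0" "D>1" and x: "x = (x1, x2)" "x \<noteq> 0" "x1 \<le> 0"
  "(D-1)/a * (x2 - x1) + x1 / b \<ge> 0"
  shows "\<exists>s>0. inverse s *\<^sub>R x \<in> contour_L a b D"
proof -
  define P where "P = (D-1)/a"
  have P: "P > 0" unfolding P_def using assms by simp
  have n3: "nn3 a b D > 0" using nn3_pos assms by auto
  define A where "A = - x1 * nn3 a b D / P"
  define B where "B = (P * (x2 - x1) + x1 / b) / (P * nn3 a b D)"
  have "x1 * nn3 a b D / P \<le> 0" using P n3 x(3) by (intro divide_nonpos_pos mult_nonpos_nonneg) auto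
  hence A: "A \<ge> 0" unfolding A_def by simp
  have B: "B \<ge> 0" unfolding B_def using P n3 x(4) unfolding P_def[symmetric] by simp
  have xe: "x = A *\<^sub>R TT3 a b D + B *\<^sub>R (0, nn3 a b D)"
  proof -
    have "A * (- P / nn3 a b D) = x1" unfolding A_def using P n3 by (simp add: field_simps)
    moreover have "A * ((- P + 1/b) / nn3 a b D) + B * nn3 a b D = x2"
      unfolding A_def B_def using P n3 assms by (simp add: field_simps)
    ultimately show ?thesis unfolding TT3_P[OF assms(1)] P_def[symmetric] x(1) by simp
  qed
  have AB: "A + B > 0"
  proof (rule ccontr)
    assume "\<not> A + B > 0"
    hence "A = 0" "B = 0" using A B by auto
    hence "x = 0" using xe by (simp add: zero_prod_def)
    thus False using x(2) by simp
  qed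
  have "inverse (A + B) *\<^sub>R x \<in> closed_segment (TT3 a b D) (0, nn3 a b D)" by (rule seg_mem[OF A B AB xe])
  thus ?thesis using AB unfolding contour_eq[OF assms(1-3)] by blast
qed

lemma exist_iii: assumes "a>0" "b>0" "D>1" and x: "x = (x1, x2)" "x \<noteq> 0" "x2 \<le> 0"
  "(D-1)/a * x2 \<le> x1 * ((D-1)/a + D/b)" and neg: "min (fst x) (snd x) < 0"
  shows "\<exists>s>0. inverse s *\<^sub>R x \<in> contour_L a b D"
    and "phi a b D x = (x1 - D * x2) / nn2 a b D"
proof -
  define P where "P = (D-1)/a"
  have P: "P > 0" unfolding P_def using assms by simp
  have n2: "nn2 a b D > 0" using nn2_pos assms by auto
  have PD: "P + D/b > 0" using P assms by (simp add: add_pos_pos)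
  define Q where "Q = P + D/b"
  have Q: "Q > 0" using PD unfolding Q_def .
  define A where "A = (x1 - x2 * P / Q) / nn2 a b D"
  define B where "B = - x2 * nn2 a b D / Q"
  have A: "A \<ge> 0" 
  proof -
    have "x2 * P / Q \<le> x1" using x(4) Q unfolding P_def[symmetric] Q_def[symmetric] by (simp add: field_simps)
    thus ?thesis unfolding A_def using n2 by simp
  qed
  have "x2 * nn2 a b D / Q \<le> 0" using Q n2 x(3) by (intro divide_nonpos_pos mult_nonpos_nonneg) auto
  hence B: "B \<ge> 0" unfolding B_def by simp
  have xe: "x = A *\<^sub>R (nn2 a b D, 0) + B *\<^sub>R TT2 a b D"
  proof -
    have "A * nn2 a b D + B * (- P / nn2 a b D) = x1" unfolding A_def B_def using Q n2 by (simp add: field_simps)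
    moreover have "B * ((- P - D/b) / nn2 a b D) = x2"
    proof -
      have e: "- P - D/b = - Q" unfolding Q_def by simp
      have "B * ((- P - D/b) / nn2 a b D) = B * (- Q / nn2 a b D)" by (simp only: e)
      also have "\<dots> = x2" unfolding B_def using Q n2 by (simp add: field_simps)
      finally show ?thesis .
    qed
    ultimately show ?thesis unfolding TT2_P[OF assms(1)] P_def[symmetric] x(1) by simp
  qed
  have AB: "A + B > 0"
  proof (rule ccontr)
    assume "\<not> A + B > 0"
    hence "A = 0" "B = 0" using A B by auto
    hence "x = 0" using xe by (simp add: zero_prod_def)
    thus False using x(2) by simp
  qed
  have mem: "inverse (A + B) *\<^sub>R x \<in> closed_segment (nn2 a b D, 0) (TT2 a b D)" by (rule seg_mem[OF A B AB xe])
  hence mem': "inverse (A + B) *\<^sub>R x \<in> contour_L a b D" unfolding contour_eq[OF assms(1-3)] by blast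
  thus "\<exists>s>0. inverse s *\<^sub>R x \<in> contour_L a b D" using AB by blast
  have ph: "phi a b D x = A + B" by (rule phi_unique[OF assms(1-3) neg AB mem'])
  have b2k: "Bf a b (TT2 a b D) (nn2 a b D, 0) = 1" using Bf_T2[of a b D] assms n2 by simp
  have b22: "Bf a b (TT2 a b D) (TT2 a b D) = 1" using ell_T2[of a b D] assms by (simp add: ell_Bf)
  have "Bf a b (TT2 a b D) (inverse (A + B) *\<^sub>R x) = 1" by (rule seg_eq[OF mem b2k b22])
  hence "Bf a b (TT2 a b D) x = A + B" unfolding Bf_scale2 using AB by (simp add: field_simps)
  thus "phi a b D x = (x1 - D * x2) / nn2 a b D" unfolding ph using Bf_T2[of a b D x] assms x(1) by simp
qed

lemma exist_ii: assumes "a>0" "b>0" "D>1" and x: "x = (x1, x2)" "x \<noteq> 0" 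
  "(D-1)/a * (x2 - x1) + x1 / b \<le> 0" "(D-1)/a * (x2 - x1) - D * x1 / b \<ge> 0"
  shows "inverse (sqrt (ell a b x)) *\<^sub>R x \<in> Arc a b D"
proof -
  define P where "P = (D-1)/a"
  have P: "P > 0" unfolding P_def using assms by simp
  have n2: "nn2 a b D > 0" using nn2_pos assms by auto
  have n3: "nn3 a b D > 0" using nn3_pos assms by auto
  have dn: "dd a b D < 0" using dd_neg assms by auto
  have "cr x (TT3 a b D) = (P * (x2 - x1) + x1 / b) / nn3 a b D"
    unfolding cr_def TT3_P[OF assms(1)] P_def[symmetric] x(1) using n3 by (simp add: field_simps)
  hence "cr x (TT3 a b D) \<le> 0" using x(3) n3 unfolding P_def by (simp add: divide_nonpos_pos)
  hence cA: "cA a b D x \<ge> 0" unfolding cA_def using dn by (simp add: divide_nonpos_neg)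
  have "cr (TT2 a b D) x = - (P * (x2 - x1) - D * x1 / b) / nn2 a b D"
    unfolding cr_def TT2_P[OF assms(1)] P_def[symmetric] x(1) using n2 by (simp add: field_simps)
  hence "cr (TT2 a b D) x \<le> 0" using x(4) n2 unfolding P_def by (simp add: divide_nonpos_pos)
  hence cB: "cB a b D x \<ge> 0" unfolding cB_def using dn by (simp add: divide_nonpos_neg)
  have ep: "ell a b x > 0" using ell_pos[OF assms(1,2) x(2)] .
  have "ell a b (inverse (sqrt (ell a b x)) *\<^sub>R x) = 1" unfolding ell_scale using ep by (simp add: power_inverse)
  moreover have "cA a b D (inverse (sqrt (ell a b x)) *\<^sub>R x) \<ge> 0" "cB a b D (inverse (sqrt (ell a b x)) *\<^sub>R x) \<ge> 0"
    unfolding cA_scale cB_scale using cA cB ep by auto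
  ultimately show ?thesis unfolding Arc_def by simp
qed

lemma Arc_sub_L: assumes "a>0" "b>0" "D>1" shows "Arc a b D \<subseteq> contour_L a b D"
  unfolding contour_eq[OF assms] by blast

lemma exist: assumes "a>0" "b>0" "D>1" "min (fst x) (snd x) < 0"
  shows "\<exists>s>0. inverse s *\<^sub>R x \<in> contour_L a b D"
proof -
  obtain x1 x2 where x: "x = (x1, x2)" by (metis prod.collapse)
  have x0: "x \<noteq> 0" using assms(4) by auto
  define P where "P = (D-1)/a"
  have P: "P > 0" unfolding P_def using assms by simp
  have PD: "P + D/b > 0" using P assms by (simp add: add_pos_pos)
  show ?thesis
  proof (cases "x1 \<le> 0")
    case True
    show ?thesis
    proof (cases "P * (x2 - x1) + x1 / b \<ge> 0")
      case True
      thus ?thesis using exist_i[OF assms(1-3) x x0 \<open>x1 \<le> 0\<close>] unfolding P_def by simp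
    next
      case c2: False
      show ?thesis
      proof (cases "P * (x2 - x1) - D * x1 / b \<ge> 0")
        case True
        have "inverse (sqrt (ell a b x)) *\<^sub>R x \<in> Arc a b D"
          using exist_ii[OF assms(1-3) x x0] c2 True unfolding P_def by simp
        moreover have "sqrt (ell a b x) > 0" using ell_pos[OF assms(1,2) x0] by simp
        ultimately show ?thesis using Arc_sub_L[OF assms(1-3)] by blast
      next
        case False
        hence h: "P * x2 < x1 * (P + D/b)" by (simp add: algebra_simps)
        have "x1 * (P + D/b) \<le> 0" using \<open>x1 \<le> 0\<close> PD by (simp add: mult_nonpos_nonneg)
        hence "P * x2 < 0" using h by linarith
        hence "x2 \<le> 0" using P by (simp add: mult_less_0_iff)
        thus ?thesis using exist_iii(1)[OF assms(1-3) x x0 _ _ assms(4)] h unfolding P_def by simp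
      qed
    qed
  next
    case False
    hence "x2 < 0" using assms(4) x by auto
    hence "P * x2 \<le> 0" using P by (simp add: mult_pos_neg less_imp_le)
    moreover have "x1 * (P + D/b) \<ge> 0" using False PD by simp
    ultimately show ?thesis using exist_iii(1)[OF assms(1-3) x x0 _ _ assms(4)] \<open>x2 < 0\<close> unfolding P_def by simp
  qed
qed

lemma phi_ge: assumes "a>0" "b>0" "D>1" "min (fst x) (snd x) < 0" "q \<in> Arc a b D"
  shows "Bf a b q x \<le> phi a b D x"
  using exist[OF assms(1-4)] phi_props(1)[OF assms(1-4) _ _ assms(5)] by blast

lemma phi_att: assumes "a>0" "b>0" "D>1" "min (fst x) (snd x) < 0"
  shows "\<exists>q \<in> Arc a b D. Bf a b q x = phi a b D x"
  using exist[OF assms(1-4)] phi_props(2)[OF assms(1-4)] by blast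

lemma arc_sum: assumes "a>0" "b>0" "D>1" "q \<in> Arc a b D"
  shows "q = cA a b D q *\<^sub>R TT2 a b D + cB a b D q *\<^sub>R TT3 a b D"
    "cA a b D q \<ge> 0" "cB a b D q \<ge> 0" "cA a b D q + cB a b D q \<ge> 1"
proof -
  have D0: "D > 0" using assms by simp
  have dn: "dd a b D \<noteq> 0" using dd_neg assms by force
  show qd: "q = cA a b D q *\<^sub>R TT2 a b D + cB a b D q *\<^sub>R TT3 a b D" by (rule decomp[OF dn])
  have q: "ell a b q = 1" "cA a b D q \<ge> 0" "cB a b D q \<ge> 0" using assms(4) unfolding Arc_def by auto
  thus "cA a b D q \<ge> 0" "cB a b D q \<ge> 0" by auto
  have "1 = Bf a b q q" using q(1) by (simp add: ell_Bf)
  also have "\<dots> = cA a b D q * Bf a b (TT2 a b D) q + cB a b D q * Bf a b (TT3 a b D) q"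
    by (subst qd, subst Bf_lin1, simp add: qd[symmetric])
  also have "\<dots> \<le> cA a b D q * 1 + cB a b D q * 1"
    using q Bf_le1[OF assms(1,2) ell_T2[OF assms(1,2) D0] q(1)] Bf_le1[OF assms(1,2) ell_T3[OF assms(1,2)] q(1)]
    by (intro add_mono mult_left_mono) auto
  finally show "cA a b D q + cB a b D q \<ge> 1" by simp
qed

lemma rb_A: "fst y > 0 \<Longrightarrow> snd y < 0 \<Longrightarrow> rb l2 b12 b23 y z = (if z = (0, snd y) then b12 else 0)"
  unfolding rb_def Let_def by auto
lemma rb_B: "fst y < snd y \<Longrightarrow> fst y < 0 \<Longrightarrow> rb l2 b12 b23 y z = (if z = (fst y, fst y) then b23 else 0)"
  unfolding rb_def Let_def by auto
lemma rb_C: "fst y \<le> 0 \<Longrightarrow> snd y \<le> fst y \<Longrightarrow> rb l2 b12 b23 y z = 0"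
  unfolding rb_def Let_def by auto

lemma DR_le: assumes "a>0" "b>0" "D>1" "b12 > 0" "b23 > 0" "min (fst y) (snd y) < 0"
  shows "D_R l2 b12 b23 a b D y \<le> 0"
proof -
  obtain y2 y3 where y: "y = (y2, y3)" by (metis prod.collapse)
  have D0: "D > 0" using assms by simp
  have n2: "nn2 a b D > 0" using nn2_pos assms by auto
  have ny: "min (fst (toR y)) (snd (toR y)) < 0" using assms(6) unfolding toR_def y by auto
  show ?thesis
  proof (cases "y2 > 0 \<and> y3 \<le> 0")
    case True
    hence y3: "y3 < 0" using assms(6) y by auto
    have S: "{z. z \<noteq> y \<and> rb l2 b12 b23 y z \<noteq> 0} = {(0, y3)}"
      using rb_A[of y l2 b12 b23] True y3 y assms(4) by auto
    have "D_R l2 b12 b23 a b D y = b12 * (phi a b D (toR (0, y3)) - phi a b D (toR y))"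
      unfolding D_R_def S using rb_A[of y l2 b12 b23] True y3 y by simp
    moreover have "phi a b D (toR (0, y3)) \<le> phi a b D (toR y)"
    proof -
      have tz: "toR (0, y3) = (0, real_of_int y3)" unfolding toR_def by simp
      have "phi a b D (toR (0, y3)) = (0 - D * real_of_int y3) / nn2 a b D"
        unfolding tz using y3 assms
        by (intro exist_iii(2)[OF assms(1-3), of _ 0 "real_of_int y3"]) (auto simp: zero_prod_def intro!: divide_nonpos_pos mult_nonneg_nonpos)
      also have "\<dots> \<le> (real_of_int y2 - D * real_of_int y3) / nn2 a b D" using True n2 by (intro divide_right_mono) auto
      also have "\<dots> = Bf a b (TT2 a b D) (toR y)" unfolding Bf_T2[OF assms(1,2) D0] toR_def y by simp
      also have "\<dots> \<le> phi a b D (toR y)"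
      proof (rule phi_ge[OF assms(1-3) ny])
        have dn: "dd a b D \<noteq> 0" using dd_neg assms by force
        show "TT2 a b D \<in> Arc a b D" unfolding Arc_def using ell_T2[OF assms(1,2) D0] cA_T2[OF dn] cB_T2[OF dn] by simp
      qed
      finally show ?thesis .
    qed
    ultimately show ?thesis using assms(4) by (simp add: mult_nonneg_nonpos)
  next
    case nA: False
    show ?thesis
    proof (cases "y2 < y3")
      case True
      hence y2: "y2 < 0" using assms(6) y by auto
      have S: "{z. z \<noteq> y \<and> rb l2 b12 b23 y z \<noteq> 0} = {(y2, y2)}"
        using rb_B[of y l2 b12 b23] True y2 y assms(5) by auto
      have "D_R l2 b12 b23 a b D y = b23 * (phi a b D (toR (y2, y2)) - phi a b D (toR y))"
        unfolding D_R_def S using rb_B[of y l2 b12 b23] True y2 y by simp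
      moreover have "phi a b D (toR (y2, y2)) \<le> phi a b D (toR y)"
      proof -
        define z where "z = toR (y2, y2)"
        have zz: "z = (real_of_int y2, real_of_int y2)" unfolding z_def toR_def by simp
        have z0: "z \<noteq> 0" using y2 zz by (simp add: zero_prod_def)
        have nz: "min (fst z) (snd z) < 0" using y2 zz by simp
        define s where "s = sqrt (ell a b z)"
        have s: "s > 0" unfolding s_def using ell_pos[OF assms(1,2) z0] by simp
        have inA: "inverse s *\<^sub>R z \<in> Arc a b D"
        proof -
          have "D * real_of_int y2 < 0" using y2 assms by (simp add: mult_pos_neg)
          hence "D * real_of_int y2 / b \<le> 0" using assms by (simp add: divide_nonpos_pos)
          thus "inverse s *\<^sub>R z \<in> Arc a b D" using exist_ii[OF assms(1-3) zz z0] y2 assms by (simp add: divide_nonpos_pos s_def)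
        qed
        have ph: "phi a b D z = s"
          by (rule phi_unique[OF assms(1-3) nz s]) (use inA Arc_sub_L[OF assms(1-3)] in blast)
        have ez: "ell a b z = a * (real_of_int y2)^2" unfolding zz ell_def by simp
        have "Bf a b (inverse s *\<^sub>R z) (toR y) = inverse s * (a * (real_of_int y2)^2)"
          unfolding Bf_def zz toR_def y by (simp add: power2_eq_square)
        also have "\<dots> = s" using s unfolding s_def ez[symmetric]
          by (simp add: field_simps)
        finally have "Bf a b (inverse s *\<^sub>R z) (toR y) = s" .
        moreover have "Bf a b (inverse s *\<^sub>R z) (toR y) \<le> phi a b D (toR y)" by (rule phi_ge[OF assms(1-3) ny inA])
        ultimately show ?thesis unfolding z_def[symmetric] ph by simp
      qed
      ultimately show ?thesis using assms(5) by (simp add: mult_nonneg_nonpos)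
    next
      case False
      hence "y2 \<le> 0" "y3 \<le> y2" using nA assms(6) y by auto
      hence "{z. z \<noteq> y \<and> rb l2 b12 b23 y z \<noteq> 0} = {}" using rb_C[of y] y by auto
      hence "D_R l2 b12 b23 a b D y = 0" unfolding D_R_def by (simp only: sum.empty)
      thus ?thesis by simp
    qed
  qed
qed

lemma Bf_M_bound: assumes "a>0" "b>0" "D>1" "q \<in> Arc a b D"
  "Bf a b (TT2 a b D) M \<le> - c" "Bf a b (TT3 a b D) M \<le> - c" "c > 0"
  shows "Bf a b q M \<le> - c"
proof -
  note h = arc_sum[OF assms(1-4)]
  have "Bf a b q M = cA a b D q * Bf a b (TT2 a b D) M + cB a b D q * Bf a b (TT3 a b D) M"
    by (subst h(1), subst Bf_lin1, simp add: h(1)[symmetric])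
  also have "\<dots> \<le> cA a b D q * (- c) + cB a b D q * (- c)"
    using h(2,3) assms(5,6) by (intro add_mono mult_left_mono) auto
  also have "\<dots> = - ((cA a b D q + cB a b D q) * c)" by (simp add: algebra_simps)
  also have "\<dots> \<le> - (1 * c)" using h(4) assms(7) by (intro le_imp_neg_le mult_right_mono) auto
  finally show ?thesis by simp
qed

theorem lemma4:
  fixes l1 l2 l3 b12 b23 a b :: real
  assumes "l1 > 0" "l2 > 0" "l3 > 0" "b12 > 0" "b23 > 0"
    and "l1 + l2 + l3 + b12 + b23 = 1"
    and "l1 < l2" "l1 < l3"
    and "a > 0" "b > 0"
  shows "\<forall>\<^sub>F D in at_top. \<exists>C>0. \<exists>\<epsilon>>0. \<forall>y :: int \<times> int.
           min (fst y) (snd y) < 0 \<and> phi a b D (toR y) > C \<longrightarrow>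
             D_R l2 b12 b23 a b D y \<le> 0 \<and>
             phi a b D (toR y + (l2 - l1, l3 - l1)) - phi a b D (toR y) < - 5 * \<epsilon>"
proof -
  define m1 where "m1 = l2 - l1"
  define m2 where "m2 = l3 - l1"
  have m1: "m1 > 0" "m1 < 1" unfolding m1_def using assms by auto
  have m2: "m2 > 0" "m2 < 1" unfolding m2_def using assms by auto
  have ev: "\<forall>\<^sub>F D in at_top. D > max 1 (max (m1/m2) (m2/m1))" by (rule eventually_gt_at_top)
  show ?thesis
  proof (rule eventually_mono[OF ev])
    fix D assume hD: "D > max 1 (max (m1/m2) (m2/m1))"
    have D1: "D > 1" and Da: "D > m1/m2" and Db: "D > m2/m1" using hD by auto
    have D0: "D > 0" using D1 by simp
    have n2: "nn2 a b D > 0" using nn2_pos assms D0 by auto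
    have n3: "nn3 a b D > 0" using nn3_pos assms by auto
    define M where "M = (l2 - l1, l3 - l1)"
    define g2 where "g2 = Bf a b (TT2 a b D) M"
    define g3 where "g3 = Bf a b (TT3 a b D) M"
    have "m1 - D * m2 < 0" using Da m2 by (simp add: field_simps)
    hence g2: "g2 < 0" unfolding g2_def Bf_T2[OF assms(9,10) D0] M_def m1_def m2_def using n2
      by (simp add: divide_neg_pos)
    have "m2 - D * m1 < 0" using Db m1 by (simp add: field_simps)
    hence g3: "g3 < 0" unfolding g3_def Bf_T3[OF assms(9,10)] M_def m1_def m2_def using n3
      by (simp add: divide_neg_pos)
    define c where "c = min (- g2) (- g3)"
    have c: "c > 0" unfolding c_def using g2 g3 by simp
    show "\<exists>C>0. \<exists>\<epsilon>>0. \<forall>y :: int \<times> int.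
           min (fst y) (snd y) < 0 \<and> phi a b D (toR y) > C \<longrightarrow>
             D_R l2 b12 b23 a b D y \<le> 0 \<and>
             phi a b D (toR y + (l2 - l1, l3 - l1)) - phi a b D (toR y) < - 5 * \<epsilon>"
    proof (rule exI[of _ 1], rule conjI, simp, rule exI[of _ "c / 10"], rule conjI)
      show "c / 10 > 0" using c by simp
    next
      show "\<forall>y :: int \<times> int.
           min (fst y) (snd y) < 0 \<and> phi a b D (toR y) > 1 \<longrightarrow>
             D_R l2 b12 b23 a b D y \<le> 0 \<and>
             phi a b D (toR y + (l2 - l1, l3 - l1)) - phi a b D (toR y) < - 5 * (c / 10)"
      proof (intro allI impI conjI)
      fix y :: "int \<times> int" assume y: "min (fst y) (snd y) < 0 \<and> phi a b D (toR y) > 1"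
      hence yn: "min (fst y) (snd y) < 0" by simp
      show "D_R l2 b12 b23 a b D y \<le> 0" by (rule DR_le[OF assms(9,10) D1 assms(4,5) yn])
      define x where "x = toR y"
      have xn: "min (fst x) (snd x) < 0" using yn unfolding x_def toR_def by auto
      have xn': "min (fst (x + M)) (snd (x + M)) < 0"
      proof (cases "fst y < 0")
        case True
        hence "fst y \<le> -1" by simp
        hence "real_of_int (fst y) \<le> -1" by simp
        hence "fst (x + M) < 0" unfolding x_def toR_def M_def using m1 unfolding m1_def by simp
        thus ?thesis by simp
      next
        case False
        hence "snd y < 0" using yn by auto
        hence "snd y \<le> -1" by simp
        hence "real_of_int (snd y) \<le> -1" by simp
        hence "snd (x + M) < 0" unfolding x_def toR_def M_def using m2 unfolding m2_def by simp
        thus ?thesis by simp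
      qed
      obtain q where q: "q \<in> Arc a b D" "Bf a b q (x + M) = phi a b D (x + M)"
        using phi_att[OF assms(9,10) D1 xn'] by blast
      have "Bf a b q x \<le> phi a b D x" by (rule phi_ge[OF assms(9,10) D1 xn q(1)])
      moreover have "Bf a b q M \<le> - c"
        by (rule Bf_M_bound[OF assms(9,10) D1 q(1)]) (use c in \<open>auto simp: c_def g2_def[symmetric] g3_def[symmetric]\<close>)
      moreover have "Bf a b q (x + M) = Bf a b q x + Bf a b q M" by (rule Bf_add2)
      ultimately have "phi a b D (x + M) - phi a b D x \<le> - c" using q(2) by linarith
      thus "phi a b D (toR y + (l2 - l1, l3 - l1)) - phi a b D (toR y) < - 5 * (c / 10)"
        using c unfolding x_def M_def by simp
    qed
    qed
  qed
qed

end
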